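(* Let $\mathcal F$ be a proper filter on $\omega$. The game $\mathfrak G(\mathcal F^+,[\omega]^{<\omega},\mathcal F^c)$ is dual to the game $\mathfrak G(\mathcal F,\omega,\mathcal F)$ (a player has a winning strategy in one iff the other player has one in the other). Consequently, in $\mathfrak G(\mathcal F^+,[\omega]^{<\omega},\mathcal F^c)$, player I never has a winning strategy, and player II has a winning strategy if and only if $\mathcal F$ is not Ramsey.
   Context: A filter on $\omega$ is a family $\mathcal F\subseteq\mathcal P(\omega)$ closed under finite intersections and supersets and containing all cofinite sets; it is proper if all its members are infinite. $\mathcal F^+=\{X:\omega\setminus X\notin\mathcal F\}$, $\mathcal F^c=\mathcal P(\omega)\setminus\mathcal F$. Game $\mathfrak G(\mathcal X,\omega,\mathcal Z)$: at each stage $k$, I chooses $X_k\in\mathcal X$ and II responds with $n_k\in X_k$; II wins if $\{n_k:k\in\omega\}\in\mathcal Z$. Game $\mathfrak G(\mathcal X,[\omega]^{<\omega},\mathcal Z)$: at each stage $k$, I chooses $X_k\in\mathcal X$ and II responds with a nonempty finite $s_k\subseteq X_k$; II wins if $\bigcup_k s_k\in\mathcal Z$. In each game I wins when II does not. A tree is a set $T$ of finite sequences of natural numbers containing the empty sequence and closed under initial segments; it is an $\mathcal F$-tree if for each $\bar s\in T$ there is $X_{\bar s}\in\mathcal F$ with $\bar s^\frown n\in T$ for all $n\in X_{\bar s}$; a branch (infinite sequence with all initial segments in $T$) is in $\mathcal F$ if its set of values is in $\mathcal F$. $\mathcal F$ is Ramsey if every $\mathcal F$-tree has a branch in $\mathcal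 F$. *)

theory Defs
  imports Main
begin

definition is_filter :: "nat set set \<Rightarrow> bool" where
  "is_filter F \<longleftrightarrow>
     (\<forall>A\<in>F. \<forall>B\<in>F. A \<inter> B \<in> F) \<and>
     (\<forall>A\<in>F. \<forall>B. A \<subseteq> B \<longrightarrow> B \<in> F) \<and>
     (\<forall>A. finite (- A) \<longrightarrow> A \<in> F)"

definition proper_filter :: "nat set set \<Rightarrow> bool" where
  "proper_filter F \<longleftrightarrow> is_filter F \<and> (\<forall>A\<in>F. infinite A)"

definition positive_sets :: "nat set set \<Rightarrow> nat set set" where
  "positive_sets F = {X. - X \<notin> F}"

definition co_family :: "nat set set \<Rightarrow> nat set set" where
  "co_family F = - F"

text \<open>A generic game: at stage k player I plays a set in XX, player II answers with a
  move m of type 'm which must be legal for that set; II wins iff res (of the whole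
  sequence of II's moves) belongs to Z.  A strategy for I maps the finite history of II's
  moves to I's next move; a strategy for II maps the finite history of I's moves (ending with
  the current move) to II's answer.\<close>

definition I_has_ws ::
  "nat set set \<Rightarrow> (nat set \<Rightarrow> 'm \<Rightarrow> bool) \<Rightarrow> ((nat \<Rightarrow> 'm) \<Rightarrow> nat set) \<Rightarrow> nat set set \<Rightarrow> bool" where
  "I_has_ws XX legal res Z \<longleftrightarrow>
     (\<exists>\<sigma> :: 'm list \<Rightarrow> nat set.
        (\<forall>h. \<sigma> h \<in> XX) \<and>
        (\<forall>m. (\<forall>k. legal (\<sigma> (map m [0..<k])) (m k)) \<longrightarrow> res m \<notin> Z))"

definition II_has_ws ::
  "nat set set \<Rightarrow> (nat set \<Rightarrow> 'm \<Rightarrow> bool) \<Rightarrow> ((nat \<Rightarrow> 'm) \<Rightarrow> nat set) \<Rightarrow> nat set set \<Rightarrow> bool" where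
  "II_has_ws XX legal res Z \<longleftrightarrow>
     (\<exists>\<tau> :: nat set list \<Rightarrow> 'm.
        (\<forall>Xs X. set Xs \<subseteq> XX \<longrightarrow> X \<in> XX \<longrightarrow> legal X (\<tau> (Xs @ [X]))) \<and>
        (\<forall>Xs. (\<forall>k. Xs k \<in> XX) \<longrightarrow> res (\<lambda>k. \<tau> (map Xs [0..<Suc k])) \<in> Z))"

text \<open>The game G(XX, omega, Z): II answers with a natural number in I's set.\<close>

definition legal_pt :: "nat set \<Rightarrow> nat \<Rightarrow> bool" where
  "legal_pt X n \<longleftrightarrow> n \<in> X"

definition res_pt :: "(nat \<Rightarrow> nat) \<Rightarrow> nat set" where
  "res_pt m = range m"

text \<open>The game G(XX, [omega]^<omega, Z): II answers with a nonempty finite subset.\<close>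

definition legal_fin :: "nat set \<Rightarrow> nat set \<Rightarrow> bool" where
  "legal_fin X s \<longleftrightarrow> s \<noteq> {} \<and> finite s \<and> s \<subseteq> X"

definition res_fin :: "(nat \<Rightarrow> nat set) \<Rightarrow> nat set" where
  "res_fin m = (\<Union>k. m k)"

definition is_tree :: "nat list set \<Rightarrow> bool" where
  "is_tree T \<longleftrightarrow> [] \<in> T \<and> (\<forall>s\<in>T. \<forall>k. take k s \<in> T)"

definition F_tree :: "nat set set \<Rightarrow> nat list set \<Rightarrow> bool" where
  "F_tree F T \<longleftrightarrow> is_tree T \<and> (\<forall>s\<in>T. \<exists>X\<in>F. \<forall>n\<in>X. s @ [n] \<in> T)"

definition is_branch :: "nat list set \<Rightarrow> (nat \<Rightarrow> nat) \<Rightarrow> bool" where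
  "is_branch T b \<longleftrightarrow> (\<forall>k. map b [0..<k] \<in> T)"

definition Ramsey :: "nat set set \<Rightarrow> bool" where
  "Ramsey F \<longleftrightarrow> (\<forall>T. F_tree F T \<longrightarrow> (\<exists>b. is_branch T b \<and> range b \<in> F))"

end

theory Submission
  imports Defs
begin


definition resp :: "('c list \<Rightarrow> 'b \<Rightarrow> 'c) \<Rightarrow> 'b list \<Rightarrow> 'c list" where
  "resp r xs = foldl (\<lambda>acc x. acc @ [r acc x]) [] xs"

lemma resp_Nil[simp]: "resp r [] = []"
  by (simp add: resp_def)

lemma resp_snoc[simp]: "resp r (xs @ [x]) = resp r xs @ [r (resp r xs) x]"
  by (simp add: resp_def)

lemma resp_map: "resp r (map X [0..<k]) = map (\<lambda>i. r (resp r (map X [0..<i])) (X i)) [0..<k]"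
  by (induction k) auto

lemma pf_p1: "proper_filter F \<Longrightarrow> \<forall>A\<in>F. \<forall>B\<in>F. A \<inter> B \<in> F"
  unfolding proper_filter_def is_filter_def by (elim conjE)
lemma pf_p2: "proper_filter F \<Longrightarrow> \<forall>A\<in>F. \<forall>B. A \<subseteq> B \<longrightarrow> B \<in> F"
  unfolding proper_filter_def is_filter_def by (elim conjE)
lemma pf_p3: "proper_filter F \<Longrightarrow> \<forall>A. finite (- A) \<longrightarrow> A \<in> F"
  unfolding proper_filter_def is_filter_def by (elim conjE)
lemma pf_p4: "proper_filter F \<Longrightarrow> \<forall>A\<in>F. infinite A"
  unfolding proper_filter_def is_filter_def by (elim conjE)

lemma pf_UNIV: "proper_filter F \<Longrightarrow> UNIV \<in> F"
  using pf_p3[of F] by (metis Compl_UNIV_eq finite.emptyI)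

lemma pf_empty: "proper_filter F \<Longrightarrow> {} \<notin> F"
  using pf_p4[of F] by (metis finite.emptyI)

lemma pf_up: "proper_filter F \<Longrightarrow> A \<in> F \<Longrightarrow> A \<subseteq> B \<Longrightarrow> B \<in> F"
  using pf_p2[of F] by blast

lemma pf_int: "proper_filter F \<Longrightarrow> A \<in> F \<Longrightarrow> B \<in> F \<Longrightarrow> A \<inter> B \<in> F"
  using pf_p1[of F] by blast
lemma pf_meet: "proper_filter F \<Longrightarrow> X \<in> positive_sets F \<Longrightarrow> Y \<in> F \<Longrightarrow> \<exists>n. n \<in> X \<and> n \<in> Y"
proof (rule ccontr)
  assume a: "proper_filter F" "X \<in> positive_sets F" "Y \<in> F" "\<not> (\<exists>n. n \<in> X \<and> n \<in> Y)"
  then have "Y \<subseteq> - X" by auto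
  then have "- X \<in> F" using pf_up a by blast
  then show False using a(2) by (simp add: positive_sets_def)
qed

lemma pf_pos: "proper_filter F \<Longrightarrow> X \<in> F \<Longrightarrow> X \<in> positive_sets F"
  using pf_int[of F X "-X"] pf_empty[of F] by (auto simp: positive_sets_def)

lemma UNIV_pos: "proper_filter F \<Longrightarrow> UNIV \<in> positive_sets F"
  using pf_pos pf_UNIV by blast

lemma lemA:
  assumes pf: "proper_filter F" and h: "I_has_ws F legal_pt res_pt F"
  shows "II_has_ws (positive_sets F) legal_fin res_fin (co_family F)"
proof -
  obtain \<sigma> where \<sigma>F: "\<And>h. \<sigma> h \<in> F"
    and win: "\<And>m. (\<forall>k. m k \<in> \<sigma> (map m [0..<k])) \<Longrightarrow> range m \<notin> F"
    using h unfolding I_has_ws_def legal_pt_def res_pt_def by blast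
  define r where "r = (\<lambda>acc Y. SOME n. n \<in> Y \<and> n \<in> \<sigma> acc)"
  have rin: "r acc Y \<in> Y \<and> r acc Y \<in> \<sigma> acc" if "Y \<in> positive_sets F" for acc Y
    unfolding r_def by (rule someI_ex) (use pf_meet[OF pf that \<sigma>F] in blast)
  define \<tau> where "\<tau> = (\<lambda>xs. {last (resp r xs)})"
  show ?thesis unfolding II_has_ws_def
  proof (intro exI conjI allI impI)
    fix Xs X assume "set Xs \<subseteq> positive_sets F" "X \<in> positive_sets F"
    then show "legal_fin X (\<tau> (Xs @ [X]))"
      using rin by (simp add: \<tau>_def legal_fin_def)
  next
    fix Xs :: "nat \<Rightarrow> nat set" assume XP: "\<forall>k. Xs k \<in> positive_sets F"
    define n where "n = (\<lambda>k. r (resp r (map Xs [0..<k])) (Xs k))"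
    have rm: "resp r (map Xs [0..<k]) = map n [0..<k]" for k
      unfolding n_def by (rule resp_map)
    have "n k \<in> \<sigma> (map n [0..<k])" for k
    proof -
      have "n k \<in> \<sigma> (resp r (map Xs [0..<k]))"
        unfolding n_def using rin[OF XP[rule_format, of k]] by blast
      then show ?thesis by (simp only: rm)
    qed
    then have "range n \<notin> F" using win by blast
    moreover have tk: "\<tau> (map Xs [0..<Suc k]) = {n k}" for k
      unfolding \<tau>_def rm by simp
    moreover have "res_fin (\<lambda>k. \<tau> (map Xs [0..<Suc k])) = range n"
      unfolding res_fin_def tk by blast
    ultimately show "res_fin (\<lambda>k. \<tau> (map Xs [0..<Suc k])) \<in> co_family F"
      by (simp add: co_family_def)
  qed
qed



lemma lemB:
  assumes pf: "proper_filter F" and h: "II_has_ws (positive_sets F) legal_fin res_fin (co_family F)"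
  shows "I_has_ws F legal_pt res_pt F"
proof -
  let ?P = "positive_sets F"
  obtain \<tau> where leg: "\<And>Xs X. set Xs \<subseteq> ?P \<Longrightarrow> X \<in> ?P \<Longrightarrow> legal_fin X (\<tau> (Xs @ [X]))"
    and win: "\<And>Xs. (\<forall>k. Xs k \<in> ?P) \<Longrightarrow> (\<Union>k. \<tau> (map Xs [0..<Suc k])) \<notin> F"
    using h unfolding II_has_ws_def res_fin_def co_family_def by blast
  define r where "r = (\<lambda>acc n. if \<exists>Y\<in>?P. n \<in> \<tau> (acc @ [Y])
      then SOME Y. Y \<in> ?P \<and> n \<in> \<tau> (acc @ [Y]) else UNIV)"
  have rP: "r acc n \<in> ?P" for acc n
  proof (cases "\<exists>Y\<in>?P. n \<in> \<tau> (acc @ [Y])")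
    case True
    then show ?thesis unfolding r_def using someI_ex[of "\<lambda>Y. Y \<in> ?P \<and> n \<in> \<tau> (acc @ [Y])"] by auto
  next
    case False
    then show ?thesis unfolding r_def using UNIV_pos[OF pf] by auto
  qed
  have rin: "n \<in> \<tau> (acc @ [r acc n])" if "\<exists>Y\<in>?P. n \<in> \<tau> (acc @ [Y])" for acc n
    using that unfolding r_def using someI_ex[of "\<lambda>Y. Y \<in> ?P \<and> n \<in> \<tau> (acc @ [Y])"] by auto
  have respP: "set (resp r h) \<subseteq> ?P" for h
    by (induction h rule: rev_induct) (auto simp: rP)
  define B where "B = (\<lambda>p. {n. \<exists>Y\<in>?P. n \<in> \<tau> (p @ [Y])})"
  have BF: "B p \<in> F" if "set p \<subseteq> ?P" for p
  proof (rule ccontr)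
    assume "B p \<notin> F"
    then have "- B p \<in> ?P" by (simp add: positive_sets_def)
    then have l: "legal_fin (- B p) (\<tau> (p @ [- B p]))" using leg that by blast
    then obtain n where "n \<in> \<tau> (p @ [- B p])" unfolding legal_fin_def by blast
    moreover then have "n \<in> - B p" using l unfolding legal_fin_def by blast
    ultimately show False using \<open>- B p \<in> ?P\<close> unfolding B_def by blast
  qed
  define \<sigma> where "\<sigma> = (\<lambda>h. B (resp r h))"
  show ?thesis unfolding I_has_ws_def legal_pt_def res_pt_def
  proof (intro exI conjI allI impI)
    fix h show "\<sigma> h \<in> F" unfolding \<sigma>_def using BF respP by blast
  next
    fix m :: "nat \<Rightarrow> nat" assume mm: "\<forall>k. m k \<in> \<sigma> (map m [0..<k])"
    define Ys where "Ys = (\<lambda>k. r (resp r (map m [0..<k])) (m k))"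
    have rm: "resp r (map m [0..<k]) = map Ys [0..<k]" for k
      unfolding Ys_def by (rule resp_map)
    have YP: "\<forall>k. Ys k \<in> ?P" using rP by (simp add: Ys_def)
    have "m k \<in> \<tau> (map Ys [0..<Suc k])" for k
    proof -
      have "\<exists>Y\<in>?P. m k \<in> \<tau> (resp r (map m [0..<k]) @ [Y])"
        using mm[rule_format, of k] unfolding \<sigma>_def B_def by blast
      note rk = rin[OF this]
      have "map Ys [0..<Suc k] = map Ys [0..<k] @ [Ys k]" by simp
      also have "\<dots> = resp r (map m [0..<k]) @ [r (resp r (map m [0..<k])) (m k)]"
        by (simp only: rm[symmetric]) (simp add: Ys_def)
      finally have e: "map Ys [0..<Suc k] = resp r (map m [0..<k]) @ [r (resp r (map m [0..<k])) (m k)]" .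
      show ?thesis using rk by (simp only: e)
    qed
    then have "range m \<subseteq> (\<Union>k. \<tau> (map Ys [0..<Suc k]))" by blast
    moreover have "(\<Union>k. \<tau> (map Ys [0..<Suc k])) \<notin> F" using win YP by blast
    ultimately show "range m \<notin> F" using pf_up[OF pf] by blast
  qed
qed

lemma lemC:
  assumes pf: "proper_filter F" and h: "I_has_ws (positive_sets F) legal_fin res_fin (co_family F)"
  shows "II_has_ws F legal_pt res_pt F"
proof -
  obtain \<sigma> where \<sigma>P: "\<And>h. \<sigma> h \<in> positive_sets F"
    and win: "\<And>m. (\<forall>k. legal_fin (\<sigma> (map m [0..<k])) (m k)) \<Longrightarrow> (\<Union>k. m k) \<in> F"
    using h unfolding I_has_ws_def res_fin_def co_family_def by blast
  define r where "r = (\<lambda>acc X. SOME n. n \<in> X \<and> n \<in> \<sigma> (map (\<lambda>i. {i}) acc))"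
  have rin: "r acc X \<in> X \<and> r acc X \<in> \<sigma> (map (\<lambda>i. {i}) acc)" if "X \<in> F" for acc X
    unfolding r_def by (rule someI_ex) (use pf_meet[OF pf \<sigma>P that] in blast)
  define \<tau> where "\<tau> = (\<lambda>xs. last (resp r xs))"
  show ?thesis unfolding II_has_ws_def
  proof (intro exI conjI allI impI)
    fix Xs X assume "set Xs \<subseteq> F" "X \<in> F"
    then show "legal_pt X (\<tau> (Xs @ [X]))"
      using rin by (simp add: \<tau>_def legal_pt_def)
  next
    fix Xs :: "nat \<Rightarrow> nat set" assume XF: "\<forall>k. Xs k \<in> F"
    define n where "n = (\<lambda>k. r (resp r (map Xs [0..<k])) (Xs k))"
    have rm: "resp r (map Xs [0..<k]) = map n [0..<k]" for k
      unfolding n_def by (rule resp_map)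
    have nk: "n k \<in> \<sigma> (map (\<lambda>k. {n k}) [0..<k])" for k
    proof -
      have "n k \<in> \<sigma> (map (\<lambda>i. {i}) (resp r (map Xs [0..<k])))"
        unfolding n_def using rin[OF XF[rule_format, of k]] by blast
      then show ?thesis by (simp only: rm map_map comp_def)
    qed
    have "\<forall>k. legal_fin (\<sigma> (map (\<lambda>k. {n k}) [0..<k])) {n k}"
      using nk by (simp add: legal_fin_def)
    then have "(\<Union>k. {n k}) \<in> F" using win by blast
    moreover have "(\<Union>k. {n k}) = range n" by blast
    moreover have tk: "\<tau> (map Xs [0..<Suc k]) = n k" for k
      unfolding \<tau>_def rm by simp
    moreover have "res_pt (\<lambda>k. \<tau> (map Xs [0..<Suc k])) = range n"
      unfolding res_pt_def tk by (rule refl)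
    ultimately show "res_pt (\<lambda>k. \<tau> (map Xs [0..<Suc k])) \<in> F"
      by simp
  qed
qed

lemma lemE:
  assumes pf: "proper_filter F"
  shows "I_has_ws F legal_pt res_pt F \<longleftrightarrow> \<not> Ramsey F"
proof
  assume "I_has_ws F legal_pt res_pt F"
  then obtain \<sigma> where \<sigma>F: "\<And>h. \<sigma> h \<in> F"
    and win: "\<And>m. (\<forall>k. m k \<in> \<sigma> (map m [0..<k])) \<Longrightarrow> range m \<notin> F"
    unfolding I_has_ws_def legal_pt_def res_pt_def by blast
  define T where "T = {s. \<forall>k<length s. s ! k \<in> \<sigma> (take k s)}"
  have "F_tree F T" unfolding F_tree_def is_tree_def
  proof (intro conjI ballI allI)
    show "[] \<in> T" by (simp add: T_def)
  next
    fix s k assume "s \<in> T" then show "take k s \<in> T"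
      by (auto simp: T_def min_def)
  next
    fix s assume "s \<in> T"
    then show "\<exists>X\<in>F. \<forall>n\<in>X. s @ [n] \<in> T"
      by (intro bexI[OF _ \<sigma>F]) (auto simp: T_def nth_append less_Suc_eq)
  qed
  moreover have "\<not> (is_branch T b \<and> range b \<in> F)" for b
  proof
    assume "is_branch T b \<and> range b \<in> F"
    then have "map b [0..<Suc k] \<in> T" for k unfolding is_branch_def by blast
    then have "b k \<in> \<sigma> (map b [0..<k])" for k
    proof -
      have "\<forall>j<length (map b [0..<Suc k]). (map b [0..<Suc k]) ! j \<in> \<sigma> (take j (map b [0..<Suc k]))"
        using \<open>\<And>k. map b [0..<Suc k] \<in> T\<close>[of k] unfolding T_def by blast
      then have "(map b [0..<Suc k]) ! k \<in> \<sigma> (take k (map b [0..<Suc k]))"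
        by (drule_tac x=k in spec) (simp del: upt_Suc)
      then show ?thesis by (simp add: take_map nth_append)
    qed
    then show False using win \<open>is_branch T b \<and> range b \<in> F\<close> by blast
  qed
  ultimately show "\<not> Ramsey F" unfolding Ramsey_def by blast
next
  assume "\<not> Ramsey F"
  then obtain T where T: "F_tree F T" and nb: "\<And>b. is_branch T b \<Longrightarrow> range b \<notin> F"
    unfolding Ramsey_def by blast
  define \<sigma> where "\<sigma> = (\<lambda>s. if s \<in> T then SOME X. X \<in> F \<and> (\<forall>n\<in>X. s @ [n] \<in> T) else UNIV)"
  have \<sigma>s: "\<sigma> s \<in> F \<and> (s \<in> T \<longrightarrow> (\<forall>n\<in>\<sigma> s. s @ [n] \<in> T))" for s
  proof (cases "s \<in> T")
    case True
    then have "\<exists>X. X \<in> F \<and> (\<forall>n\<in>X. s @ [n] \<in> T)" using T unfolding F_tree_def by blast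
    then have "(SOME X. X \<in> F \<and> (\<forall>n\<in>X. s @ [n] \<in> T)) \<in> F \<and> (\<forall>n\<in>(SOME X. X \<in> F \<and> (\<forall>n\<in>X. s @ [n] \<in> T)). s @ [n] \<in> T)"
      by (rule someI_ex)
    then show ?thesis using True unfolding \<sigma>_def by simp
  next
    case False then show ?thesis using pf_UNIV[OF pf] by (simp add: \<sigma>_def)
  qed
  show "I_has_ws F legal_pt res_pt F" unfolding I_has_ws_def legal_pt_def res_pt_def
  proof (intro exI conjI allI impI)
    fix h show "\<sigma> h \<in> F" using \<sigma>s by blast
  next
    fix m :: "nat \<Rightarrow> nat" assume mm: "\<forall>k. m k \<in> \<sigma> (map m [0..<k])"
    have "map m [0..<k] \<in> T" for k
    proof (induction k)
      case 0 then show ?case using T by (simp add: F_tree_def is_tree_def)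
    next
      case (Suc k) then show ?case using \<sigma>s[of "map m [0..<k]"] mm by auto
    qed
    then show "range m \<notin> F" using nb unfolding is_branch_def by blast
  qed
qed



definition UU :: "(nat set list \<Rightarrow> nat) \<Rightarrow> nat set list \<Rightarrow> nat set" where
  "UU \<tau> A = {\<tau> (take (Suc i) A) | i. i < length A}"

primrec st :: "(nat set list \<Rightarrow> nat) \<Rightarrow> nat \<Rightarrow> nat set list \<times> nat set list" where
  "st \<tau> 0 = ([], [])"
| "st \<tau> (Suc k) = (let A = fst (st \<tau> k); B = snd (st \<tau> k); U = UU \<tau> A \<union> UU \<tau> B
     in (A @ [- U], B @ [- insert (\<tau> (A @ [- U])) U]))"

lemma st_fst: "fst (st \<tau> (Suc k)) = fst (st \<tau> k) @ [- (UU \<tau> (fst (st \<tau> k)) \<union> UU \<tau> (snd (st \<tau> k)))]"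
  by (simp add: Let_def)

lemma st_snd: "snd (st \<tau> (Suc k)) = snd (st \<tau> k) @
   [- insert (\<tau> (fst (st \<tau> (Suc k)))) (UU \<tau> (fst (st \<tau> k)) \<union> UU \<tau> (snd (st \<tau> k)))]"
  by (simp add: Let_def)

lemma st_fst_map: "fst (st \<tau> k) = map (\<lambda>i. last (fst (st \<tau> (Suc i)))) [0..<k]"
proof (induction k)
  case 0 then show ?case by simp
next
  case (Suc k)
  have "fst (st \<tau> (Suc k)) = fst (st \<tau> k) @ [last (fst (st \<tau> (Suc k)))]"
    by (simp only: st_fst) simp
  then show ?case using Suc by simp
qed

lemma st_snd_map: "snd (st \<tau> k) = map (\<lambda>i. last (snd (st \<tau> (Suc i)))) [0..<k]"
proof (induction k)
  case 0 then show ?case by simp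
next
  case (Suc k)
  have "snd (st \<tau> (Suc k)) = snd (st \<tau> k) @ [last (snd (st \<tau> (Suc k)))]"
    by (simp only: st_snd) simp
  then show ?case using Suc by simp
qed

lemma UU_map: "UU \<tau> (map X [0..<k]) = (\<lambda>i. \<tau> (map X [0..<Suc i])) ` {..<k}"
proof -
  have "take (Suc i) (map X [0..<k]) = map X [0..<Suc i]" if "i < k" for i
    using that by (simp add: take_map del: upt_Suc)
  then show ?thesis unfolding UU_def by force
qed

lemma lemD:
  assumes pf: "proper_filter F"
  shows "\<not> II_has_ws F legal_pt res_pt F"
proof
  assume "II_has_ws F legal_pt res_pt F"
  then obtain \<tau> where leg: "\<And>Xs X. set Xs \<subseteq> F \<Longrightarrow> X \<in> F \<Longrightarrow> \<tau> (Xs @ [X]) \<in> X"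
    and win: "\<And>Xs. (\<forall>k. Xs k \<in> F) \<Longrightarrow> range (\<lambda>k. \<tau> (map Xs [0..<Suc k])) \<in> F"
    unfolding II_has_ws_def legal_pt_def res_pt_def by blast
  define XA where "XA = (\<lambda>i. last (fst (st \<tau> (Suc i))))"
  define XB where "XB = (\<lambda>i. last (snd (st \<tau> (Suc i))))"
  have Am: "fst (st \<tau> k) = map XA [0..<k]" for k unfolding XA_def by (rule st_fst_map)
  have Bm: "snd (st \<tau> k) = map XB [0..<k]" for k unfolding XB_def by (rule st_snd_map)
  define a where "a = (\<lambda>k. \<tau> (map XA [0..<Suc k]))"
  define b where "b = (\<lambda>k. \<tau> (map XB [0..<Suc k]))"
  define U where "U = (\<lambda>k. a ` {..<k} \<union> b ` {..<k})"
  have UUk: "UU \<tau> (fst (st \<tau> k)) \<union> UU \<tau> (snd (st \<tau> k)) = U k" for k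
    unfolding Am Bm UU_map U_def a_def b_def by (rule refl)
  have XAk: "XA k = - U k" for k
    unfolding XA_def st_fst UUk by simp
  have XBk: "XB k = - insert (a k) (U k)" for k
    unfolding XB_def st_snd UUk a_def Am[symmetric] by simp
  have fin: "finite (U k)" for k unfolding U_def by simp
  have XAF: "XA k \<in> F" for k
    using pf_p3[OF pf] fin[of k] unfolding XAk by simp
  have XBF: "XB k \<in> F" for k
    using pf_p3[OF pf] fin[of k] unfolding XBk by simp
  have ak: "a k \<notin> U k" for k
  proof -
    have "\<tau> (map XA [0..<k] @ [XA k]) \<in> XA k" by (rule leg) (use XAF in auto)
    then show ?thesis unfolding a_def using XAk[of k] by simp
  qed
  have bk: "b k \<notin> insert (a k) (U k)" for k
  proof -
    have "\<tau> (map XB [0..<k] @ [XB k]) \<in> XB k" by (rule leg) (use XBF in auto)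
    then show ?thesis unfolding b_def using XBk[of k] by simp
  qed
  have disj: "a i \<noteq> b j" for i j
  proof (cases "i < j")
    case True
    then have "a i \<in> U j" unfolding U_def by blast
    then show ?thesis using bk[of j] by auto
  next
    case False
    show ?thesis
    proof (cases "i = j")
      case True then show ?thesis using bk[of j] by auto
    next
      case False
      then have "j < i" using \<open>\<not> i < j\<close> by simp
      then have "b j \<in> U i" unfolding U_def by blast
      then show ?thesis using ak[of i] by auto
    qed
  qed
  have "range a \<in> F" unfolding a_def by (rule win) (use XAF in blast)
  moreover have "range b \<in> F" unfolding b_def by (rule win) (use XBF in blast)
  ultimately have "range a \<inter> range b \<in> F" by (rule pf_int[OF pf])
  moreover have "range a \<inter> range b = {}" using disj by blast
  ultimately show False using pf_empty[OF pf] by simp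
qed


theorem theorem2p21:
  fixes F :: "nat set set"
  assumes "proper_filter F"
  shows "(I_has_ws (positive_sets F) legal_fin res_fin (co_family F)
            \<longleftrightarrow> II_has_ws F legal_pt res_pt F)
       \<and> (II_has_ws (positive_sets F) legal_fin res_fin (co_family F)
            \<longleftrightarrow> I_has_ws F legal_pt res_pt F)
       \<and> \<not> I_has_ws (positive_sets F) legal_fin res_fin (co_family F)
       \<and> (II_has_ws (positive_sets F) legal_fin res_fin (co_family F) \<longleftrightarrow> \<not> Ramsey F)"
proof -
  have nI: "\<not> I_has_ws (positive_sets F) legal_fin res_fin (co_family F)"
    using lemC[OF assms] lemD[OF assms] by blast
  have b: "II_has_ws (positive_sets F) legal_fin res_fin (co_family F)
            \<longleftrightarrow> I_has_ws F legal_pt res_pt F"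
    using lemA[OF assms] lemB[OF assms] by blast
  show ?thesis using nI b lemD[OF assms] lemE[OF assms] by blast
qed

end
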